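(* Let $1\le k\le d$ and $\mu\ge1$ be integers, and let $t_0,\dots,t_\mu$ be defined by $t_\mu=1$ and $t_m=\sum_{j=m+1}^{\mu}t_j\,(j-m-1)\binom{d-k+1}{j-m}$ for $0\le m<\mu$. Then $$\sum_{m=0}^{\mu}t_m\binom{d}{m}=\sum_{m=0}^{\mu}(d-k)^{\mu-m}\binom{k}{m},\qquad \sum_{m=0}^{\mu}t_m\binom{d-1}{m-1}=\sum_{m=0}^{\mu}(d-k)^{\mu-m}\binom{k-1}{m-1},$$ $$\sum_{m=0}^{\mu}t_m\, m\left[\binom{d+1}{m+1}-\binom{d-k+1}{m+1}\right]=\sum_{m=0}^{\mu}k(d-k)^{\mu-m}\binom{k}{m}-\binom{k}{\mu+1}.$$
   Context: Conventions: $0^0=1$; $\binom{\ell}{m}=0$ if $m<0$ or $m>\ell$ (for $\ell\ge0$). *)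

theory Defs
  imports Main
begin

definition binom :: "nat \<Rightarrow> int \<Rightarrow> int" where
  "binom l m = (if m < 0 then 0 else int (l choose nat m))"

end

theory Submission imports Defs "HOL-Computational_Algebra.Formal_Power_Series" begin

function uu :: "nat \<Rightarrow> nat \<Rightarrow> int" where
  "uu n r = (if r = 0 then 1 else (\<Sum>i\<in>{1..r}. uu n (r - i) * (int i - 1) * int ((n+1) choose i)))"
  by auto
termination by (relation "measure snd") auto

declare uu.simps[simp del]

definition BB :: "nat \<Rightarrow> int fps" where "BB a = Abs_fps (\<lambda>i. int (a choose i))"
definition GG :: "nat \<Rightarrow> int fps" where "GG n = Abs_fps (\<lambda>i. int n ^ i)"
definition UU :: "nat \<Rightarrow> int fps" where "UU n = Abs_fps (uu n)"

lemma BB_add: "BB a * BB b = BB (a + b)"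
proof (rule fps_ext)
  fix r
  have "fps_nth (BB a * BB b) r = (\<Sum>i=0..r. int (a choose i) * int (b choose (r - i)))"
    by (simp add: fps_mult_nth BB_def)
  also have "\<dots> = int (\<Sum>i\<le>r. (a choose i) * (b choose (r - i)))"
    by (simp add: atLeast0AtMost)
  also have "\<dots> = int ((a+b) choose r)" by (simp add: vandermonde)
  finally show "fps_nth (BB a * BB b) r = fps_nth (BB (a+b)) r" by (simp add: BB_def)
qed

lemma GG_inv: "GG n * (1 - fps_const (int n) * fps_X) = 1"
proof (rule fps_ext)
  fix r
  have "GG n * (1 - fps_const (int n) * fps_X) = GG n - fps_const (int n) * (fps_X * GG n)"
    by (simp add: algebra_simps)
  then show "fps_nth (GG n * (1 - fps_const (int n) * fps_X)) r = fps_nth (1::int fps) r"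
    by (cases r) (auto simp: GG_def fps_X_mult_nth)
qed

lemma choose_id: fixes i n :: nat assumes ai: "i \<ge> 1"
  shows "int (i - 1) * int ((n+1) choose i) = int n * int (n choose (i - 1)) - int (n choose i)"
proof -
  obtain j where j: "i = Suc j" using ai by (cases i) auto
  have "Suc j * (Suc n choose Suc j) = Suc n * (n choose j)" by (rule Suc_times_binomial)
  then have "int (Suc j) * int (Suc n choose Suc j) = int (Suc n) * int (n choose j)"
    by (metis of_nat_mult)
  then show ?thesis using j by (simp add: algebra_simps)
qed

lemma H_eq: "BB n * (1 - fps_const (int n) * fps_X) =
   Abs_fps (\<lambda>i. if i = 0 then 1 else - (int i - 1) * int ((n+1) choose i))"
proof (rule fps_ext)
  fix r
  have "BB n * (1 - fps_const (int n) * fps_X) = BB n - fps_const (int n) * (fps_X * BB n)"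
    by (simp add: algebra_simps)
  moreover have "r \<ge> 1 \<Longrightarrow> (int r - 1) * int ((n+1) choose r) = int n * int (n choose (r - 1)) - int (n choose r)"
    using choose_id[of r n] by (simp add: of_nat_diff)
  ultimately show "fps_nth (BB n * (1 - fps_const (int n) * fps_X)) r = fps_nth (Abs_fps (\<lambda>i. if i = 0 then 1 else - (int i - 1) * int ((n+1) choose i))) r"
    by (cases r) (auto simp: BB_def fps_X_mult_nth)
qed

lemma UH: "UU n * (BB n * (1 - fps_const (int n) * fps_X)) = 1"
proof (rule fps_ext)
  fix r
  let ?h = "\<lambda>i. if i = 0 then 1 else - (int i - 1) * int ((n+1) choose i)"
  have "fps_nth (UU n * (BB n * (1 - fps_const (int n) * fps_X))) r = fps_nth (Abs_fps ?h * UU n) r"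
    by (simp only: H_eq mult.commute[of "UU n"])
  also have "\<dots> = (\<Sum>i=0..r. ?h i * uu n (r - i))" by (simp add: fps_mult_nth UU_def)
  also have "\<dots> = fps_nth (1::int fps) r"
  proof (cases r)
    case 0 then show ?thesis by (simp add: uu.simps)
  next
    case (Suc s)
    have "(\<Sum>i=0..r. ?h i * uu n (r - i)) = uu n r + (\<Sum>i=1..r. ?h i * uu n (r - i))"
      by (simp add: sum.atLeast_Suc_atMost Suc)
    also have "(\<Sum>i=1..r. ?h i * uu n (r - i)) = - (\<Sum>i=1..r. uu n (r - i) * (int i - 1) * int ((n+1) choose i))"
      by (simp add: sum_negf[symmetric] algebra_simps)
    also have "uu n r = (\<Sum>i=1..r. uu n (r - i) * (int i - 1) * int ((n+1) choose i))"
      using Suc by (subst uu.simps) simp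
    finally show ?thesis using Suc by simp
  qed
  finally show "fps_nth (UU n * (BB n * (1 - fps_const (int n) * fps_X))) r = fps_nth (1::int fps) r" .
qed

lemma UB: "UU n * BB n = GG n"
proof -
  have "UU n * BB n = UU n * BB n * (GG n * (1 - fps_const (int n) * fps_X))" by (simp add: GG_inv)
  also have "\<dots> = (UU n * (BB n * (1 - fps_const (int n) * fps_X))) * GG n" by (simp add: algebra_simps)
  also have "\<dots> = GG n" by (simp add: UH)
  finally show ?thesis .
qed

lemma binom_nat: "binom l (int m) = int (l choose m)"
  by (simp add: binom_def)

lemma binom_shift: "binom l (int m - 1) = fps_nth (fps_X * BB l) m"
  by (cases m) (auto simp: binom_def BB_def fps_X_mult_nth nat_diff_distrib)

lemma prodU: "fps_nth (F * UU n) r = (\<Sum>i=0..r. fps_nth F i * uu n (r - i))"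
  by (simp add: fps_mult_nth UU_def)

lemma prodG: "fps_nth (F * GG n) r = (\<Sum>i=0..r. fps_nth F i * int n ^ (r - i))"
  by (simp add: fps_mult_nth GG_def)

lemma uu_Suc: "uu n (Suc r) = (\<Sum>m=0..r. uu n (r - m) * int m * int ((n+1) choose (m+1)))"
proof -
  have "uu n (Suc r) = (\<Sum>i\<in>{1..Suc r}. uu n (Suc r - i) * (int i - 1) * int ((n+1) choose i))"
    by (subst uu.simps) simp
  also have "\<dots> = (\<Sum>m=0..r. uu n (Suc r - Suc m) * (int (Suc m) - 1) * int ((n+1) choose Suc m))"
    by (subst sum.shift_bounds_cl_Suc_ivl[symmetric]) simp
  also have "\<dots> = (\<Sum>m=0..r. uu n (r - m) * int m * int ((n+1) choose (m+1)))" by simp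
  finally show ?thesis .
qed

lemma choose_id2: "int m * int ((d+1) choose (m+1)) = int d * int (d choose m) - int (d choose (m+1))"
proof -
  have "Suc m * (Suc d choose Suc m) = Suc d * (d choose m)" by (rule Suc_times_binomial)
  then have "int (Suc m) * int (Suc d choose Suc m) = int (Suc d) * int (d choose m)"
    by (metis of_nat_mult)
  then show ?thesis by (simp add: algebra_simps)
qed

lemma choose_id3: "x * int m * int ((d+1) choose (m+1)) = int d * (int (d choose m) * x) - int (d choose (m+1)) * x"
proof -
  have "x * int m * int ((d+1) choose (m+1)) = x * (int m * int ((d+1) choose (m+1)))" by (simp only: mult.assoc)
  also have "\<dots> = x * (int d * int (d choose m) - int (d choose (m+1)))" by (simp only: choose_id2)
  finally show ?thesis by (simp add: algebra_simps)
qed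

lemma S_Suc: "fps_nth (BB k * GG n) (Suc r) = int (k choose Suc r) + int n * fps_nth (BB k * GG n) r"
proof -
  have "fps_nth (BB k * GG n) (Suc r) = (\<Sum>i=0..Suc r. int (k choose i) * int n ^ (Suc r - i))"
    by (simp add: fps_mult_nth BB_def GG_def)
  also have "\<dots> = (\<Sum>i=0..r. int (k choose i) * int n ^ (Suc r - i)) + int (k choose Suc r)"
    by simp
  also have "(\<Sum>i=0..r. int (k choose i) * int n ^ (Suc r - i)) = int n * (\<Sum>i=0..r. int (k choose i) * int n ^ (r - i))"
    by (simp add: sum_distrib_left Suc_diff_le algebra_simps)
  also have "(\<Sum>i=0..r. int (k choose i) * int n ^ (r - i)) = fps_nth (BB k * GG n) r"
    by (simp add: fps_mult_nth BB_def GG_def)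
  finally show ?thesis by simp
qed

theorem mainTheorem10:
  fixes k d \<mu> :: nat and t :: "nat \<Rightarrow> int"
  assumes "1 \<le> k" and "k \<le> d" and "1 \<le> \<mu>"
    and "t \<mu> = 1"
    and "\<And>m. m < \<mu> \<Longrightarrow>
           t m = (\<Sum>j = m + 1..\<mu>. t j * (int j - int m - 1) * binom (d - k + 1) (int j - int m))"
  shows "((\<Sum>m = 0..\<mu>. t m * binom d (int m))
           = (\<Sum>m = 0..\<mu>. (int d - int k) ^ (\<mu> - m) * binom k (int m))) \<and>
         ((\<Sum>m = 0..\<mu>. t m * binom (d - 1) (int m - 1))
           = (\<Sum>m = 0..\<mu>. (int d - int k) ^ (\<mu> - m) * binom (k - 1) (int m - 1))) \<and>
         ((\<Sum>m = 0..\<mu>. t m * int m * (binom (d + 1) (int m + 1) - binom (d - k + 1) (int m + 1)))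
           = (\<Sum>m = 0..\<mu>. int k * (int d - int k) ^ (\<mu> - m) * binom k (int m)) - binom k (int \<mu> + 1))"
proof -
  define n where "n = d - k"
  have dkn: "d = k + n" using assms(2) n_def by simp
  have dk: "int d - int k = int n" using assms(2) n_def by simp
  have tr: "t (\<mu> - r) = uu n r" if "r \<le> \<mu>" for r
    using that
  proof (induction r rule: less_induct)
    case (less r)
    show ?case
    proof (cases r)
      case 0 then show ?thesis using assms(4) by (simp add: uu.simps)
    next
      case (Suc s)
      define m where "m = \<mu> - r"
      have mr: "\<mu> = m + r" using less.prems m_def by simp
      have "t m = (\<Sum>j = m + 1..\<mu>. t j * (int j - int m - 1) * binom (d - k + 1) (int j - int m))"
        using assms(5)[of m] mr Suc by simp
      also have "\<dots> = (\<Sum>j = 1 + m..r + m. t j * (int j - int m - 1) * binom (n + 1) (int j - int m))"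
        using mr n_def by (simp add: add.commute)
      also have "\<dots> = (\<Sum>i = 1..r. t (i + m) * (int (i + m) - int m - 1) * binom (n + 1) (int (i + m) - int m))"
        by (rule sum.shift_bounds_cl_nat_ivl)
      also have "\<dots> = (\<Sum>i = 1..r. uu n (r - i) * (int i - 1) * int ((n+1) choose i))"
      proof (rule sum.cong)
        fix i assume i: "i \<in> {1..r}"
        have "t (\<mu> - (r - i)) = uu n (r - i)" using less.IH[of "r - i"] i less.prems by auto
        moreover have "\<mu> - (r - i) = i + m" using i mr by auto
        moreover have "binom (n + 1) (int (i + m) - int m) = int ((n+1) choose i)"
          by (simp add: binom_def)
        ultimately show "t (i + m) * (int (i + m) - int m - 1) * binom (n + 1) (int (i + m) - int m)
             = uu n (r - i) * (int i - 1) * int ((n+1) choose i)" by simp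
      qed simp
      also have "\<dots> = uu n r" using Suc by (subst (2) uu.simps) simp
      finally show ?thesis using m_def by simp
    qed
  qed
  have tm: "t m = uu n (\<mu> - m)" if "m \<le> \<mu>" for m
    using tr[of "\<mu> - m"] that by simp
  have key: "BB d * UU n = BB k * GG n"
    by (simp add: dkn BB_add[symmetric] UB[symmetric] algebra_simps)
  have key2: "fps_X * BB (d - 1) * UU n = fps_X * BB (k - 1) * GG n"
  proof -
    have "d - 1 = (k - 1) + n" using dkn assms(1) by simp
    then show ?thesis by (simp add: BB_add[symmetric] UB[symmetric] algebra_simps)
  qed
  define S where "S = fps_nth (BB k * GG n) \<mu>"
  have S_def2: "S = (\<Sum>m = 0..\<mu>. int n ^ (\<mu> - m) * int (k choose m))"
    unfolding S_def fps_mult_nth by (simp add: BB_def GG_def mult.commute)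
  have I1: "(\<Sum>m = 0..\<mu>. t m * binom d (int m)) = S"
  proof -
    have "(\<Sum>m = 0..\<mu>. t m * binom d (int m)) = (\<Sum>m = 0..\<mu>. fps_nth (BB d) m * uu n (\<mu> - m))"
      by (rule sum.cong) (auto simp: tm binom_nat BB_def)
    also have "\<dots> = fps_nth (BB d * UU n) \<mu>" by (simp add: prodU)
    finally show ?thesis by (simp add: key S_def)
  qed
  have I2: "(\<Sum>m = 0..\<mu>. t m * binom (d - 1) (int m - 1))
           = (\<Sum>m = 0..\<mu>. (int d - int k) ^ (\<mu> - m) * binom (k - 1) (int m - 1))"
  proof -
    have "(\<Sum>m = 0..\<mu>. t m * binom (d - 1) (int m - 1)) = (\<Sum>m = 0..\<mu>. fps_nth (fps_X * BB (d-1)) m * uu n (\<mu> - m))"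
      by (rule sum.cong) (auto simp: tm binom_shift)
    also have "\<dots> = fps_nth (fps_X * BB (d-1) * UU n) \<mu>" by (simp add: prodU)
    also have "\<dots> = fps_nth (fps_X * BB (k-1) * GG n) \<mu>" by (simp only: key2)
    also have "\<dots> = (\<Sum>m = 0..\<mu>. (int d - int k) ^ (\<mu> - m) * binom (k - 1) (int m - 1))"
      unfolding prodG dk binom_shift by (simp add: mult.commute)
    finally show ?thesis .
  qed
  have A: "(\<Sum>m = 0..\<mu>. t m * int m * binom (d - k + 1) (int m + 1)) = uu n (Suc \<mu>)"
  proof -
    have "(\<Sum>m = 0..\<mu>. t m * int m * binom (d - k + 1) (int m + 1))
        = (\<Sum>m=0..\<mu>. uu n (\<mu> - m) * int m * int ((n+1) choose (m+1)))"
      by (rule sum.cong) (auto simp: tm n_def binom_def nat_add_distrib)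
    then show ?thesis by (simp add: uu_Suc)
  qed
  have B1: "(\<Sum>m = 0..\<mu>. t m * int m * binom (d + 1) (int m + 1))
      = int d * (\<Sum>m=0..\<mu>. fps_nth (BB d) m * uu n (\<mu> - m)) - (\<Sum>m=0..\<mu>. int (d choose (m+1)) * uu n (\<mu> - m))"
  proof -
    have "(\<Sum>m = 0..\<mu>. t m * int m * binom (d + 1) (int m + 1))
       = (\<Sum>m=0..\<mu>. int d * (fps_nth (BB d) m * uu n (\<mu> - m)) - int (d choose (m+1)) * uu n (\<mu> - m))"
    proof (rule sum.cong)
      fix m assume "m \<in> {0..\<mu>}"
      then have "t m = uu n (\<mu> - m)" by (simp add: tm)
      moreover have "binom (d + 1) (int m + 1) = int ((d+1) choose (m+1))"
        by (simp add: binom_def nat_add_distrib)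
      ultimately show "t m * int m * binom (d + 1) (int m + 1) =
          int d * (fps_nth (BB d) m * uu n (\<mu> - m)) - int (d choose (m+1)) * uu n (\<mu> - m)"
        by (simp only: BB_def fps_nth_Abs_fps choose_id3)
    qed simp
    then show ?thesis by (simp add: sum_subtractf sum_distrib_left)
  qed
  have B2: "(\<Sum>m=0..\<mu>. int (d choose (m+1)) * uu n (\<mu> - m)) = fps_nth (BB k * GG n) (Suc \<mu>) - uu n (Suc \<mu>)"
  proof -
    have "fps_nth (BB d * UU n) (Suc \<mu>) = (\<Sum>i=0..Suc \<mu>. int (d choose i) * uu n (Suc \<mu> - i))"
      by (simp add: prodU BB_def)
    also have "\<dots> = uu n (Suc \<mu>) + (\<Sum>i=Suc 0..Suc \<mu>. int (d choose i) * uu n (Suc \<mu> - i))"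
      by (simp add: sum.atLeast_Suc_atMost)
    also have "(\<Sum>i=Suc 0..Suc \<mu>. int (d choose i) * uu n (Suc \<mu> - i)) = (\<Sum>m=0..\<mu>. int (d choose (m+1)) * uu n (\<mu> - m))"
      by (subst sum.shift_bounds_cl_Suc_ivl) simp
    finally show ?thesis by (simp add: key)
  qed
  have I3: "(\<Sum>m = 0..\<mu>. t m * int m * (binom (d + 1) (int m + 1) - binom (d - k + 1) (int m + 1)))
           = int k * S - int (k choose Suc \<mu>)"
  proof -
    have "(\<Sum>m = 0..\<mu>. t m * int m * (binom (d + 1) (int m + 1) - binom (d - k + 1) (int m + 1)))
       = (\<Sum>m = 0..\<mu>. t m * int m * binom (d + 1) (int m + 1)) - (\<Sum>m = 0..\<mu>. t m * int m * binom (d - k + 1) (int m + 1))"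
      by (simp add: sum_subtractf algebra_simps)
    also have "\<dots> = int d * S - (int (k choose Suc \<mu>) + int n * S)"
      using A B1 B2 I1 S_Suc[of k n \<mu>] 
      by (simp add: S_def prodU[symmetric] key)
    also have "\<dots> = int k * S - int (k choose Suc \<mu>)" using dkn by (simp add: algebra_simps)
    finally show ?thesis .
  qed
  show ?thesis
  proof (intro conjI)
    show "(\<Sum>m = 0..\<mu>. t m * binom d (int m)) = (\<Sum>m = 0..\<mu>. (int d - int k) ^ (\<mu> - m) * binom k (int m))"
      using I1 by (simp add: S_def2 dk binom_nat)
    show "(\<Sum>m = 0..\<mu>. t m * binom (d - 1) (int m - 1)) = (\<Sum>m = 0..\<mu>. (int d - int k) ^ (\<mu> - m) * binom (k - 1) (int m - 1))"
      by (rule I2)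
    have "binom k (int \<mu> + 1) = int (k choose Suc \<mu>)" by (simp add: binom_def nat_add_distrib)
    then show "(\<Sum>m = 0..\<mu>. t m * int m * (binom (d + 1) (int m + 1) - binom (d - k + 1) (int m + 1)))
           = (\<Sum>m = 0..\<mu>. int k * (int d - int k) ^ (\<mu> - m) * binom k (int m)) - binom k (int \<mu> + 1)"
      using I3 by (simp add: S_def2 dk binom_nat sum_distrib_left mult.assoc)
  qed
qed

end
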